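(* Let $\ell:\mathcal{H}\times\mathcal{Z}\to[0,M]$ be $L$-Lipschitz in $h$, and let the objective $F$ be $\sigma$-strongly convex, $L$-Lipschitz and $\nu$-smooth. Suppose SGD is run for $T$ iterations from a fixed initial hypothesis with the uniform sampling distribution $P$ on $\{1,\dots,n\}^T$ and step sizes $\alpha_t=(\sigma t+\nu)^{-1}$. Then SGD is $(\beta,\rho)$-uniformly stable with respect to $\ell$ and $P$, with $$\beta\le\frac{2L^2}{\sigma n}\quad\text{and}\quad\rho\le\frac{2L^2}{\sigma T}.$$
   Context: Setting: $\mathcal{Z}=\mathcal{X}\times\mathcal{Y}$ with $\mathcal{X}$ compact, $\mathcal{H}$ a subset of Euclidean space, dataset $S=(z_1,\dots,z_n)\in\mathcal{Z}^n$. SGD with hyperparameters $\theta=(i_1,\dots,i_T)\in\Theta=\{1,\dots,n\}^T$ performs $h_t=h_{t-1}-\alpha_t\nabla F(h_{t-1},z_{i_t})$, $t=1,\dots,T$, and outputs $A(S,\theta)=h_T$. $f$ is $L$-Lipschitz if $|f(h,z)-f(h',z)|\le L\|h-h'\|$; $\nu$-smooth if $\|\nabla f(h,z)-\nabla f(h',z)\|\le\nu\|h-h'\|$; $\sigma$-strongly convex if $\frac{\sigma}{2}\|h'-h\|^2+\langle\nabla f(h,z),h'-h\rangle\le f(h',z)-f(h,z)$, all for every $h,h'\in\mathcal{H}$, $z\in\mathcal{Z}$. $\beta$-uniform (data) stability w.r.t. $\ell$ and $P$: $\sup_{S,S':d_H(S,S')=1}\sup_{z}\big|\mathbb{E}_{\theta\sim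 P}[\ell(A(S,\theta),z)-\ell(A(S',\theta),z)]\big|\le\beta$ ($d_H$ = Hamming distance). $\rho$-uniform hyperparameter stability w.r.t. $\ell$: $\sup_{S}\sup_z\sup_{\theta,\theta'\in\Theta:d_H(\theta,\theta')=1}|\ell(A(S,\theta),z)-\ell(A(S,\theta'),z)|\le\rho$. $(\beta,\rho)$-uniformly stable means both hold. *)

theory Defs
  imports "HOL-Analysis.Analysis" "HOL-Probability.Probability"
begin

text \<open>Datasets S = (z_1,...,z_n) are lists of length n; hyperparameters
  theta = (i_1,...,i_T) are lists of length T with entries in {1..n}.
  z_i is the list entry S ! (i - 1).\<close>

definition hamming :: "'b list \<Rightarrow> 'b list \<Rightarrow> nat" where
  "hamming xs ys = card {i. i < length xs \<and> xs ! i \<noteq> ys ! i}"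

definition datasets :: "'z set \<Rightarrow> nat \<Rightarrow> 'z list set" where
  "datasets Z n = {S. length S = n \<and> set S \<subseteq> Z}"

definition hyperparams :: "nat \<Rightarrow> nat \<Rightarrow> nat list set" where
  "hyperparams n T = {\<theta>. length \<theta> = T \<and> set \<theta> \<subseteq> {1..n}}"

primrec sgd_iter ::
  "(nat \<Rightarrow> real) \<Rightarrow> ('a::real_normed_vector \<Rightarrow> 'z \<Rightarrow> 'a) \<Rightarrow> 'a \<Rightarrow> 'z list \<Rightarrow> nat list \<Rightarrow> nat \<Rightarrow> 'a"
where
  "sgd_iter \<alpha> g h0 S \<theta> 0 = h0"
| "sgd_iter \<alpha> g h0 S \<theta> (Suc t) =
     sgd_iter \<alpha> g h0 S \<theta> t - \<alpha> (Suc t) *\<^sub>R g (sgd_iter \<alpha> g h0 S \<theta> t) (S ! (\<theta> ! t - 1))"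

definition sgd :: "(nat \<Rightarrow> real) \<Rightarrow> ('a::real_normed_vector \<Rightarrow> 'z \<Rightarrow> 'a) \<Rightarrow> 'a \<Rightarrow> 'z list \<Rightarrow> nat list \<Rightarrow> 'a"
  where "sgd \<alpha> g h0 S \<theta> = sgd_iter \<alpha> g h0 S \<theta> (length \<theta>)"

definition lipschitz_in_h :: "'a::real_normed_vector set \<Rightarrow> 'z set \<Rightarrow> ('a \<Rightarrow> 'z \<Rightarrow> real) \<Rightarrow> real \<Rightarrow> bool" where
  "lipschitz_in_h H Z f L \<longleftrightarrow>
     (\<forall>h\<in>H. \<forall>h'\<in>H. \<forall>z\<in>Z. \<bar>f h z - f h' z\<bar> \<le> L * norm (h - h'))"

definition is_gradient :: "'a::real_inner set \<Rightarrow> 'z set \<Rightarrow> ('a \<Rightarrow> 'z \<Rightarrow> real) \<Rightarrow> ('a \<Rightarrow> 'z \<Rightarrow> 'a) \<Rightarrow> bool" where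
  "is_gradient H Z F g \<longleftrightarrow>
     (\<forall>h\<in>H. \<forall>z\<in>Z. ((\<lambda>x. F x z) has_derivative (\<lambda>v. g h z \<bullet> v)) (at h))"

definition smooth_in_h :: "'a::real_inner set \<Rightarrow> 'z set \<Rightarrow> ('a \<Rightarrow> 'z \<Rightarrow> 'a) \<Rightarrow> real \<Rightarrow> bool" where
  "smooth_in_h H Z g \<nu> \<longleftrightarrow>
     (\<forall>h\<in>H. \<forall>h'\<in>H. \<forall>z\<in>Z. norm (g h z - g h' z) \<le> \<nu> * norm (h - h'))"

definition strongly_convex_in_h :: "'a::real_inner set \<Rightarrow> 'z set \<Rightarrow> ('a \<Rightarrow> 'z \<Rightarrow> real) \<Rightarrow> ('a \<Rightarrow> 'z \<Rightarrow> 'a) \<Rightarrow> real \<Rightarrow> bool" where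
  "strongly_convex_in_h H Z F g \<sigma> \<longleftrightarrow>
     (\<forall>h\<in>H. \<forall>h'\<in>H. \<forall>z\<in>Z.
        \<sigma> / 2 * (norm (h' - h))\<^sup>2 + g h z \<bullet> (h' - h) \<le> F h' z - F h z)"

definition uniformly_data_stable ::
  "'z set \<Rightarrow> nat \<Rightarrow> ('z list \<Rightarrow> 'c \<Rightarrow> 'a) \<Rightarrow> ('a \<Rightarrow> 'z \<Rightarrow> real) \<Rightarrow> 'c pmf \<Rightarrow> real \<Rightarrow> bool" where
  "uniformly_data_stable Z n A l P \<beta> \<longleftrightarrow>
     (\<forall>S\<in>datasets Z n. \<forall>S'\<in>datasets Z n. hamming S S' = 1 \<longrightarrow> (\<forall>z\<in>Z.
        \<bar>measure_pmf.expectation P (\<lambda>\<theta>. l (A S \<theta>) z - l (A S' \<theta>) z)\<bar> \<le> \<beta>))"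

definition uniformly_hyper_stable ::
  "'z set \<Rightarrow> nat \<Rightarrow> 'c list set \<Rightarrow> ('z list \<Rightarrow> 'c list \<Rightarrow> 'a) \<Rightarrow> ('a \<Rightarrow> 'z \<Rightarrow> real) \<Rightarrow> real \<Rightarrow> bool" where
  "uniformly_hyper_stable Z n \<Theta> A l \<rho> \<longleftrightarrow>
     (\<forall>S\<in>datasets Z n. \<forall>z\<in>Z. \<forall>\<theta>\<in>\<Theta>. \<forall>\<theta>'\<in>\<Theta>. hamming \<theta> \<theta>' = 1 \<longrightarrow>
        \<bar>l (A S \<theta>) z - l (A S \<theta>') z\<bar> \<le> \<rho>)"

end

theory Submission
  imports Defs
begin


lemma key_alg:
  fixes gx gy d u :: "'a::real_inner"
  assumes s: "\<sigma> > 0" and nu: "\<nu> \<ge> \<sigma>" and a0: "0 < a" and a1: "a \<le> 1/(\<sigma>+\<nu>)"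
    and I: "\<sigma> * inner (d+u) (d+u) - inner (gy-gx) d - 2 * inner (gy-gx) u - \<nu> * inner u u \<le> 0"
    and u_def: "u = -(1/\<nu>) *\<^sub>R ((gy - gx) - \<sigma> *\<^sub>R d)"
  shows "norm (d - a *\<^sub>R (gy - gx)) \<le> (1 - a*\<sigma>) * norm d"
proof -
  define G where "G = gy - gx"
  define P where "P = inner G G"
  define Q where "Q = inner G d"
  define D where "D = inner d d"
  have nu0: "\<nu> > 0" using s nu by linarith
  have u: "u = -(1/\<nu>) *\<^sub>R (G - \<sigma> *\<^sub>R d)" using u_def G_def by simp
  have e1: "inner G u = -(1/\<nu>) * (P - \<sigma>*Q)"
    unfolding u P_def Q_def by (simp add: inner_simps algebra_simps)
  have e2: "inner d u = -(1/\<nu>) * (Q - \<sigma>*D)"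
    unfolding u D_def Q_def by (simp add: inner_simps algebra_simps inner_commute)
  have e3: "inner u u = (1/\<nu>^2) * (P - 2*\<sigma>*Q + \<sigma>^2*D)"
    unfolding u P_def D_def Q_def by (simp add: inner_simps algebra_simps inner_commute power2_eq_square)
  have "inner (d+u) (d+u) = D + 2 * inner d u + inner u u"
    unfolding D_def by (simp add: inner_simps inner_commute)
  with I e1 e2 e3 have I2: "\<sigma> * (D + 2 * (-(1/\<nu>) * (Q - \<sigma>*D)) + (1/\<nu>^2) * (P - 2*\<sigma>*Q + \<sigma>^2*D))
      - Q - 2 * (-(1/\<nu>) * (P - \<sigma>*Q)) - \<nu> * ((1/\<nu>^2) * (P - 2*\<sigma>*Q + \<sigma>^2*D)) \<le> 0"
    by (simp add: G_def Q_def)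
  define A where "A = Q - \<sigma>*D"
  define B where "B = P - 2*\<sigma>*Q + \<sigma>^2*D"
  have B0: "B \<ge> 0"
  proof -
    have "B = inner (G - \<sigma> *\<^sub>R d) (G - \<sigma> *\<^sub>R d)"
      unfolding B_def P_def Q_def D_def by (simp add: inner_simps inner_commute power2_eq_square algebra_simps)
    thus ?thesis by simp
  qed
  have I3: "\<nu>^2 * A \<ge> (\<nu>+\<sigma>) * B"
  proof -
    have "\<nu>^2 * (\<sigma> * (D + 2 * (-(1/\<nu>) * (Q - \<sigma>*D)) + (1/\<nu>^2) * (P - 2*\<sigma>*Q + \<sigma>^2*D))
      - Q - 2 * (-(1/\<nu>) * (P - \<sigma>*Q)) - \<nu> * ((1/\<nu>^2) * (P - 2*\<sigma>*Q + \<sigma>^2*D))) \<le> 0"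
      using I2 by (simp add: mult_nonneg_nonpos)
    moreover have "\<nu>^2 * (\<sigma> * (D + 2 * (-(1/\<nu>) * (Q - \<sigma>*D)) + (1/\<nu>^2) * (P - 2*\<sigma>*Q + \<sigma>^2*D))
      - Q - 2 * (-(1/\<nu>) * (P - \<sigma>*Q)) - \<nu> * ((1/\<nu>^2) * (P - 2*\<sigma>*Q + \<sigma>^2*D)))
      = (\<nu>+\<sigma>) * B - \<nu>^2 * A"
      unfolding A_def B_def using nu0 by (simp add: field_simps power2_eq_square)
    ultimately show ?thesis by linarith
  qed
  have A_ge: "\<nu> * A \<ge> B"
  proof -
    have "\<nu>^2 * A \<ge> \<nu> * B" using I3 B0 s by (smt (verit) mult_right_mono)
    hence "\<nu> * (\<nu> * A) \<ge> \<nu> * B" by (simp add: power2_eq_square)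
    thus ?thesis using nu0 by simp
  qed
  have c0: "1 - a*\<sigma> \<ge> 0"
  proof -
    have "a * (\<sigma>+\<nu>) \<le> 1" using a1 s nu by (simp add: field_simps)
    thus ?thesis using a0 nu0 by (smt (verit) mult_left_mono)
  qed
  have ab: "a * (2*\<sigma> + \<nu>) \<le> 2"
  proof -
    have "a * (\<sigma>+\<nu>) \<le> 1" using a1 s nu by (simp add: field_simps)
    moreover have "a*\<sigma> \<le> 1" using c0 by simp
    ultimately show ?thesis by (simp add: algebra_simps)
  qed
  have key: "a * B \<le> 2*(1 - a*\<sigma>) * A"
  proof -
    have "a * \<nu> \<le> 2 * (1 - a*\<sigma>)" using ab by (simp add: algebra_simps)
    hence "a * \<nu> * A \<ge> a * B" using A_ge a0 by (simp add: mult_left_mono mult.assoc)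
    have "A \<ge> 0" proof - have "\<nu> * A \<ge> 0" using A_ge B0 by linarith thus ?thesis using nu0 by (simp add: zero_le_mult_iff) qed
    have "a * B \<le> a * (\<nu> * A)" using A_ge a0 by simp
    also have "\<dots> = (a*\<nu>) * A" by simp
    also have "\<dots> \<le> 2*(1 - a*\<sigma>) * A" using \<open>a * \<nu> \<le> 2 * (1 - a*\<sigma>)\<close> \<open>A\<ge>0\<close> by (rule mult_right_mono)
    finally show ?thesis .
  qed
  have "d - a *\<^sub>R G = (1 - a*\<sigma>) *\<^sub>R d - a *\<^sub>R (G - \<sigma> *\<^sub>R d)" by (simp add: algebra_simps)
  hence "(norm (d - a *\<^sub>R G))^2 = (1-a*\<sigma>)^2 * D - 2*a*(1-a*\<sigma>) * A + a^2 * B"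
    unfolding A_def B_def D_def P_def Q_def power2_norm_eq_inner
    by (simp add: inner_simps inner_commute algebra_simps power2_eq_square)
  also have "\<dots> \<le> (1-a*\<sigma>)^2 * D"
  proof -
    have "a^2 * B \<le> 2*a*(1-a*\<sigma>) * A" using key a0
      by (metis (no_types, opaque_lifting) mult.assoc mult.left_commute mult_left_mono order_less_imp_le power2_eq_square)
    thus ?thesis by linarith
  qed
  also have "\<dots> = ((1-a*\<sigma>) * norm d)^2" unfolding D_def by (simp add: power_mult_distrib power2_norm_eq_inner)
  finally have "(norm (d - a *\<^sub>R G))^2 \<le> ((1-a*\<sigma>) * norm d)^2" .
  hence "norm (d - a *\<^sub>R G) \<le> (1-a*\<sigma>) * norm d"
    by (rule power2_le_imp_le) (use c0 in simp)
  thus ?thesis unfolding G_def .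
qed

lemma zin:
  assumes "S \<in> datasets Z n" "\<theta> \<in> hyperparams n T" "t < T"
  shows "S ! (\<theta> ! t - 1) \<in> Z"
proof -
  have "\<theta> ! t \<in> set \<theta>" using assms(2,3) unfolding hyperparams_def by auto
  hence "\<theta> ! t \<in> {1..n}" using assms(2) unfolding hyperparams_def by auto
  hence "\<theta> ! t - 1 < length S" using assms(1) unfolding datasets_def by auto
  hence "S ! (\<theta> ! t - 1) \<in> set S" by (rule nth_mem)
  thus ?thesis using assms(1) unfolding datasets_def by auto
qed

lemma iter_in_H:
  assumes h0: "h0 \<in> H" and steps: "\<forall>h\<in>H. \<forall>z\<in>Z. \<forall>t\<in>{1..T}. h - \<alpha> t *\<^sub>R g h z \<in> H"
    and S: "S \<in> datasets Z n" and th: "\<theta> \<in> hyperparams n T"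
  shows "m \<le> T \<Longrightarrow> sgd_iter \<alpha> g h0 S \<theta> m \<in> H"
proof (induction m)
  case 0 thus ?case using h0 by simp
next
  case (Suc m)
  have "S ! (\<theta> ! m - 1) \<in> Z" using zin[OF S th] Suc.prems by simp
  moreover have "Suc m \<in> {1..T}" using Suc.prems by simp
  ultimately show ?case using Suc steps by simp
qed


locale sgdset =
  fixes H :: "'a::euclidean_space set" and Z :: "'z set"
    and F :: "'a \<Rightarrow> 'z \<Rightarrow> real" and g :: "'a \<Rightarrow> 'z \<Rightarrow> 'a"
    and \<sigma> \<nu> L :: real
  assumes convH: "convex H" and s_pos: "\<sigma> > 0" and nus: "\<nu> \<ge> \<sigma>"
    and grad: "is_gradient H Z F g" and sc: "strongly_convex_in_h H Z F g \<sigma>"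
    and lip: "lipschitz_in_h H Z F L" and sm: "smooth_in_h H Z g \<nu>"
    and L_nn: "L \<ge> 0"
    and step1: "\<forall>h\<in>H. \<forall>z\<in>Z. h - (1/(\<sigma>+\<nu>)) *\<^sub>R g h z \<in> H"
begin

lemma nu_pos: "\<nu> > 0" using s_pos nus by linarith

lemma seg_in: "x \<in> H \<Longrightarrow> y \<in> H \<Longrightarrow> 0 \<le> s \<Longrightarrow> s \<le> 1 \<Longrightarrow> x + s *\<^sub>R (y - x) \<in> H"
proof -
  assume "x \<in> H" "y \<in> H" "0 \<le> s" "s \<le> 1"
  hence "(1-s) *\<^sub>R x + s *\<^sub>R y \<in> H" using convH by (intro convexD) auto
  moreover have "(1-s) *\<^sub>R x + s *\<^sub>R y = x + s *\<^sub>R (y - x)" by (simp add: algebra_simps)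
  ultimately show ?thesis by simp
qed

lemma descent:
  assumes x: "x \<in> H" and y: "y \<in> H" and z: "z \<in> Z"
  shows "F y z \<le> F x z + inner (g x z) (y - x) + \<nu>/2 * (norm (y - x))^2"
proof -
  define d where "d = y - x"
  define \<phi> where "\<phi> s = F (x + s *\<^sub>R d) z - s * inner (g x z) d - \<nu>/2 * s^2 * (norm d)^2" for s
  have "\<phi> 0 \<ge> \<phi> 1"
  proof (rule DERIV_nonpos_imp_nonincreasing[of 0 1 \<phi>])
    show "(0::real) \<le> 1" by simp
  next
    fix s :: real assume s: "0 \<le> s" "s \<le> 1"
    define p where "p = x + s *\<^sub>R d"
    have p: "p \<in> H" using seg_in[OF x y s] unfolding p_def d_def .
    have dF: "((\<lambda>v. F v z) has_derivative (\<lambda>v. inner (g p z) v)) (at p)"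
      using grad p z unfolding is_gradient_def by blast
    have dl: "((\<lambda>t. x + t *\<^sub>R d) has_derivative (\<lambda>t. t *\<^sub>R d)) (at s)"
      by (auto intro!: derivative_eq_intros)
    have "((\<lambda>t. F (x + t *\<^sub>R d) z) has_derivative (\<lambda>t. inner (g p z) (t *\<^sub>R d))) (at s)"
      using has_derivative_compose[OF dl, of "\<lambda>v. F v z"] dF unfolding p_def by blast
    moreover have "(\<lambda>t. inner (g p z) (t *\<^sub>R d)) = (\<lambda>t. (inner (g p z) d) * t)" by (simp add: mult.commute)
    ultimately have d1: "((\<lambda>t. F (x + t *\<^sub>R d) z) has_real_derivative (inner (g p z) d)) (at s)"
      unfolding has_field_derivative_def by simp
    have "(\<phi> has_real_derivative (inner (g p z) d - inner (g x z) d - \<nu>/2 * (2 * s) * (norm d)^2)) (at s)"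
      unfolding \<phi>_def
      by (rule derivative_eq_intros d1 refl | simp)+
    moreover have "inner (g p z) d - inner (g x z) d - \<nu>/2 * (2 * s) * (norm d)^2 \<le> 0"
    proof -
      have "inner (g p z) d - inner (g x z) d = inner (g p z - g x z) d" by (simp add: inner_diff_left)
      also have "\<dots> \<le> norm (g p z - g x z) * norm d" by (rule norm_cauchy_schwarz)
      also have "\<dots> \<le> (\<nu> * norm (p - x)) * norm d"
        using sm p x z unfolding smooth_in_h_def by (intro mult_right_mono) auto
      also have "norm (p - x) = s * norm d" unfolding p_def using s by simp
      finally show ?thesis by (simp add: power2_eq_square algebra_simps)
    qed
    ultimately show "\<exists>y. (\<phi> has_real_derivative y) (at s) \<and> y \<le> 0" by blast
  qed
  thus ?thesis unfolding \<phi>_def d_def by simp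
qed


lemma local_contr:
  assumes z: "z \<in> Z" and y: "y \<in> H" and r: "r > 0" and ball: "ball y r \<inter> affine hull H \<subseteq> H"
    and x: "x \<in> H" and close: "norm (x - y) < r/3" and a0: "0 < a" and a1: "a \<le> 1/(\<sigma>+\<nu>)"
  shows "norm ((x - a *\<^sub>R g x z) - (y - a *\<^sub>R g y z)) \<le> (1 - a*\<sigma>) * norm (x - y)"
proof -
  define gx where "gx = g x z"
  define gy where "gy = g y z"
  define d where "d = y - x"
  define u where "u = -(1/\<nu>) *\<^sub>R ((gy - gx) - \<sigma> *\<^sub>R d)"
  define z1 where "z1 = y + u"
  define z2 where "z2 = x - u"
  have nu0: "\<nu> > 0" by (rule nu_pos)
  have nd: "norm d = norm (x - y)" unfolding d_def by (simp add: norm_minus_commute)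
  have "norm ((gy - gx) - \<sigma> *\<^sub>R d) \<le> norm (gy - gx) + norm (\<sigma> *\<^sub>R d)" by (rule norm_triangle_ineq4)
  also have "norm (gy - gx) \<le> \<nu> * norm d"
    using sm x y z unfolding smooth_in_h_def gx_def gy_def d_def by blast
  also have "norm (\<sigma> *\<^sub>R d) = \<sigma> * norm d" using s_pos by simp
  finally have "norm ((gy - gx) - \<sigma> *\<^sub>R d) \<le> (\<nu> + \<sigma>) * norm d" by (simp add: algebra_simps)
  hence "norm ((gy - gx) - \<sigma> *\<^sub>R d) \<le> (2*\<nu>) * norm d" using nus
    by (smt (verit) mult_right_mono norm_ge_zero)
  moreover have "norm u = norm ((gy - gx) - \<sigma> *\<^sub>R d) / \<nu>"
    unfolding u_def norm_scaleR using nu0 by simp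
  ultimately have nu_le: "norm u \<le> 2 * norm d" using nu0 by (simp add: divide_le_eq ac_simps)
  have nur: "norm u < r" using nu_le close nd norm_ge_zero[of "x-y"] by linarith
  have z1b: "z1 \<in> ball y r" unfolding z1_def using nur by (simp add: dist_norm)
  have "y - z2 = d + u" unfolding z2_def d_def by (simp add: algebra_simps)
  hence "norm (y - z2) \<le> norm d + norm u" by (simp add: norm_triangle_ineq)
  hence "norm (y - z2) < r" using nu_le close nd norm_ge_zero[of "x-y"] by linarith
  hence z2b: "z2 \<in> ball y r" by (simp add: dist_norm)
  define a1 where "a1 = 1/(\<sigma>+\<nu>)"
  define c where "c = (\<sigma>+\<nu>)/\<nu>"
  define xp where "xp = x - a1 *\<^sub>R gx"
  define yp where "yp = y - a1 *\<^sub>R gy"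
  have xp: "xp \<in> H" using step1 x z unfolding xp_def a1_def gx_def by blast
  have yp: "yp \<in> H" using step1 y z unfolding yp_def a1_def gy_def by blast
  have ca1: "c * a1 = 1/\<nu>" unfolding c_def a1_def using nu0 s_pos by (simp add: field_simps)
  have c1: "c = 1 + \<sigma>/\<nu>" unfolding c_def using nu0 by (simp add: field_simps)
  define G where "G = gy - gx"
  have uG: "u = (\<sigma>/\<nu>) *\<^sub>R d - (1/\<nu>) *\<^sub>R G"
    unfolding u_def G_def by (simp add: algebra_simps)
  have ypxp: "yp - xp = d - a1 *\<^sub>R G" unfolding xp_def yp_def d_def G_def by (simp add: algebra_simps)
  have cd: "c *\<^sub>R d = d + (\<sigma>/\<nu>) *\<^sub>R d" unfolding c1 by (simp add: scaleR_add_left)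
  have "x + c *\<^sub>R (yp - xp) = x + c *\<^sub>R d - (c*a1) *\<^sub>R G"
    unfolding ypxp by (simp add: scaleR_diff_right)
  also have "\<dots> = x + d + (\<sigma>/\<nu>) *\<^sub>R d - (1/\<nu>) *\<^sub>R G" unfolding ca1 cd by simp
  also have "\<dots> = z1" unfolding z1_def uG d_def by simp
  finally have z1e: "z1 = x + c *\<^sub>R (yp - xp)" by simp
  have "y + c *\<^sub>R (xp - yp) = y - c *\<^sub>R (yp - xp)" by (simp add: scaleR_diff_right)
  also have "\<dots> = y - c *\<^sub>R d + (c*a1) *\<^sub>R G"
    unfolding ypxp by (simp add: scaleR_diff_right)
  also have "\<dots> = y - d - (\<sigma>/\<nu>) *\<^sub>R d + (1/\<nu>) *\<^sub>R G" unfolding ca1 cd by simp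
  also have "\<dots> = z2" unfolding z2_def uG d_def by simp
  finally have z2e: "z2 = y + c *\<^sub>R (xp - yp)" by simp
  have aff: "affine (affine hull H)" by simp
  have hs: "H \<subseteq> affine hull H" by (rule hull_subset)
  have "z1 \<in> affine hull H" unfolding z1e using mem_affine_3_minus[OF aff] x xp yp hs by blast
  with z1b ball have z1H: "z1 \<in> H" by blast
  have "z2 \<in> affine hull H" unfolding z2e using mem_affine_3_minus[OF aff] y xp yp hs by blast
  with z2b ball have z2H: "z2 \<in> H" by blast
  have S1: "\<sigma>/2 * (norm (z1 - x))^2 + inner gx (z1 - x) \<le> F z1 z - F x z"
    using sc x z1H z unfolding strongly_convex_in_h_def gx_def by blast
  have D1: "F z1 z \<le> F y z + inner gy (z1 - y) + \<nu>/2 * (norm (z1 - y))^2"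
    using descent[OF y z1H z] unfolding gy_def .
  have S2: "\<sigma>/2 * (norm (z2 - y))^2 + inner gy (z2 - y) \<le> F z2 z - F y z"
    using sc y z2H z unfolding strongly_convex_in_h_def gy_def by blast
  have D2: "F z2 z \<le> F x z + inner gx (z2 - x) + \<nu>/2 * (norm (z2 - x))^2"
    using descent[OF x z2H z] unfolding gx_def .
  have e1: "z1 - x = d + u" "z1 - y = u" "z2 - y = -(d + u)" "z2 - x = -u"
    unfolding z1_def z2_def d_def by (simp_all add: algebra_simps)
  have "\<sigma> * (norm (d+u))^2 + inner gx (d+u) - inner gy (d+u) - inner gy u + inner gx u - \<nu> * (norm u)^2 \<le> 0"
    using S1 D1 S2 D2 unfolding e1 norm_minus_cancel inner_minus_right by linarith
  hence I: "\<sigma> * inner (d+u) (d+u) - inner (gy-gx) d - 2 * inner (gy-gx) u - \<nu> * inner u u \<le> 0"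
    unfolding power2_norm_eq_inner by (simp add: inner_simps)
  have "norm (d - a *\<^sub>R (gy - gx)) \<le> (1 - a*\<sigma>) * norm d"
    by (rule key_alg[OF s_pos nus a0 a1 I u_def])
  moreover have "(x - a *\<^sub>R g x z) - (y - a *\<^sub>R g y z) = - (d - a *\<^sub>R (gy - gx))"
    unfolding d_def gx_def gy_def by (simp add: algebra_simps)
  ultimately show ?thesis using nd by (simp only: norm_minus_cancel)
qed


lemma Gm_lip:
  assumes z: "z \<in> Z" and x: "x \<in> H" and y: "y \<in> H" and a0: "0 \<le> a"
  shows "norm ((x - a *\<^sub>R g x z) - (y - a *\<^sub>R g y z)) \<le> (1 + a*\<nu>) * norm (x - y)"
proof -
  have E: "(x - a *\<^sub>R g x z) - (y - a *\<^sub>R g y z) = (x - y) - a *\<^sub>R (g x z - g y z)" by (simp add: algebra_simps)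
  have "norm ((x - a *\<^sub>R g x z) - (y - a *\<^sub>R g y z)) \<le> norm (x - y) + norm (a *\<^sub>R (g x z - g y z))"
    unfolding E by (rule norm_triangle_ineq4)
  also have "norm (a *\<^sub>R (g x z - g y z)) \<le> a * (\<nu> * norm (x - y))"
    using sm x y z a0 unfolding smooth_in_h_def by (simp add: mult_left_mono)
  finally show ?thesis by (simp add: algebra_simps)
qed

lemma seg_contr:
  assumes z: "z \<in> Z" and x: "x \<in> H" and y: "y \<in> H" and r: "r > 0"
    and balls: "\<And>t. 0 \<le> t \<Longrightarrow> t \<le> 1 \<Longrightarrow> ball (x + t *\<^sub>R (y - x)) r \<inter> affine hull H \<subseteq> H"
    and a0: "0 < a" and a1: "a \<le> 1/(\<sigma>+\<nu>)"
  shows "norm ((x - a *\<^sub>R g x z) - (y - a *\<^sub>R g y z)) \<le> (1 - a*\<sigma>) * norm (x - y)"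
proof -
  define Gm where "Gm w = w - a *\<^sub>R g w z" for w
  define c where "c = 1 - a*\<sigma>"
  obtain N :: nat where N: "norm (y - x) / (r/3) < real N" using reals_Archimedean2 by blast
  have "0 \<le> norm (y - x) / (r/3)" using r by simp
  hence "real N > 0" using N by linarith
  hence N0: "N > 0" by simp
  define p where "p k = x + (real k / real N) *\<^sub>R (y - x)" for k
  have pH: "p k \<in> H" if "k \<le> N" for k
    unfolding p_def using seg_in[OF x y] that N0 by simp
  have step: "norm (p k - p (Suc k)) < r/3" for k
  proof -
    have "p k - p (Suc k) = - ((1 / real N) *\<^sub>R (y - x))"
      unfolding p_def by (simp add: algebra_simps add_divide_distrib scaleR_add_left)
    hence "norm (p k - p (Suc k)) = norm (y - x) / real N" by simp
    also have "\<dots> < r/3" using N N0 r by (simp add: divide_less_eq mult.commute)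
    finally show ?thesis .
  qed
  have "k \<le> N \<Longrightarrow> norm (Gm (p k) - Gm x) \<le> c * (real k / real N) * norm (y - x)" for k
  proof (induction k)
    case 0 thus ?case by (simp add: p_def)
  next
    case (Suc k)
    have kN: "k \<le> N" using Suc.prems by simp
    have b: "ball (p (Suc k)) r \<inter> affine hull H \<subseteq> H"
      unfolding p_def using balls Suc.prems N0 by simp
    have "norm (Gm (p k) - Gm (p (Suc k))) \<le> c * norm (p k - p (Suc k))"
      unfolding Gm_def c_def by (rule local_contr[OF z pH[OF Suc.prems] r b pH[OF kN] step a0 a1])
    also have "norm (p k - p (Suc k)) = norm (y - x) / real N"
    proof -
      have "p k - p (Suc k) = - ((1 / real N) *\<^sub>R (y - x))"
        unfolding p_def by (simp add: algebra_simps add_divide_distrib scaleR_add_left)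
      thus ?thesis by simp
    qed
    finally have h1: "norm (Gm (p (Suc k)) - Gm (p k)) \<le> c * (norm (y - x) / real N)"
      by (simp add: norm_minus_commute)
    have "norm (Gm (p (Suc k)) - Gm x) \<le> norm (Gm (p (Suc k)) - Gm (p k)) + norm (Gm (p k) - Gm x)"
      by (rule norm_diff_triangle_le[OF order_refl order_refl])
    also have "\<dots> \<le> c * (norm (y - x) / real N) + c * (real k / real N) * norm (y - x)"
      using h1 Suc.IH[OF kN] by linarith
    also have "\<dots> = c * (real (Suc k) / real N) * norm (y - x)" by (simp add: field_simps add_divide_distrib)
    finally show ?case .
  qed
  from this[of N] have "norm (Gm y - Gm x) \<le> c * norm (y - x)" using N0 by (simp add: p_def)
  thus ?thesis unfolding Gm_def c_def by (simp add: norm_minus_commute)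
qed


lemma shrink:
  assumes p: "p \<in> H" and w: "w \<in> H" and e: "e > 0" and wb: "ball w e \<inter> affine hull H \<subseteq> H"
    and s0: "0 < s" and s1: "s \<le> 1"
  shows "ball (p + s *\<^sub>R (w - p)) (s*e) \<inter> affine hull H \<subseteq> H"
proof
  fix v assume v: "v \<in> ball (p + s *\<^sub>R (w - p)) (s*e) \<inter> affine hull H"
  define q where "q = p + s *\<^sub>R (w - p)"
  have qH: "q \<in> H" unfolding q_def using seg_in[OF p w] s0 s1 by simp
  define w' where "w' = w + (1/s) *\<^sub>R (v - q)"
  have hs: "H \<subseteq> affine hull H" by (rule hull_subset)
  have "w' \<in> affine hull H" unfolding w'_def
    by (rule mem_affine_3_minus[OF affine_affine_hull]) (use w qH hs v in auto)
  moreover have "dist w w' < e"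
  proof -
    have "dist w w' = norm (v - q) / s" unfolding w'_def dist_norm using s0 by simp
    also have "norm (v - q) < s * e" using v unfolding q_def by (simp add: dist_norm norm_minus_commute)
    hence "norm (v - q) / s < e" using s0 by (simp add: divide_less_eq mult.commute)
    finally show ?thesis .
  qed
  ultimately have w'H: "w' \<in> H" using wb by auto
  have "p + s *\<^sub>R (w' - p) = q + (s * (1/s)) *\<^sub>R (v - q)"
    unfolding w'_def q_def by (simp add: algebra_simps)
  also have "\<dots> = v" using s0 by simp
  finally have "v = p + s *\<^sub>R (w' - p)" by simp
  thus "v \<in> H" using seg_in[OF p w'H] s0 s1 by simp
qed

lemma global_contr:
  assumes z: "z \<in> Z" and x: "x \<in> H" and y: "y \<in> H" and a0: "0 < a" and a1: "a \<le> 1/(\<sigma>+\<nu>)"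
  shows "norm ((x - a *\<^sub>R g x z) - (y - a *\<^sub>R g y z)) \<le> (1 - a*\<sigma>) * norm (x - y)"
proof -
  define Gm where "Gm w = w - a *\<^sub>R g w z" for w
  define c where "c = 1 - a*\<sigma>"
  have c0: "c \<ge> 0"
  proof -
    have "a * (\<sigma>+\<nu>) \<le> 1" using a1 s_pos nus by (simp add: field_simps)
    thus ?thesis unfolding c_def using a0 nu_pos by (smt (verit) mult_left_mono)
  qed
  have "rel_interior H \<noteq> {}" using rel_interior_eq_empty[OF convH] x by blast
  then obtain w where "w \<in> rel_interior H" by blast
  then obtain e where wH: "w \<in> H" and e: "e > 0" and wb: "ball w e \<inter> affine hull H \<subseteq> H"
    unfolding mem_rel_interior_ball by blast
  define K where "K = (1 + a*\<nu>) * (norm (x - w) + norm (w - y))"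
  have K0: "K \<ge> 0" unfolding K_def using a0 nu_pos by simp
  have main: "norm (Gm x - Gm y) \<le> c * norm (x - y) + s * K" if s0: "0 < s" and s1: "s \<le> 1" for s
  proof -
    define xs where "xs = x + s *\<^sub>R (w - x)"
    define ys where "ys = y + s *\<^sub>R (w - y)"
    have xsH: "xs \<in> H" unfolding xs_def using seg_in[OF x wH] s0 s1 by simp
    have ysH: "ys \<in> H" unfolding ys_def using seg_in[OF y wH] s0 s1 by simp
    have balls: "ball (xs + t *\<^sub>R (ys - xs)) (s*e) \<inter> affine hull H \<subseteq> H" if "0 \<le> t" "t \<le> 1" for t
    proof -
      define p where "p = x + t *\<^sub>R (y - x)"
      have pH: "p \<in> H" unfolding p_def using seg_in[OF x y] that by simp
      have "xs + t *\<^sub>R (ys - xs) = p + s *\<^sub>R (w - p)"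
        unfolding xs_def ys_def p_def by (simp add: algebra_simps)
      thus ?thesis using shrink[OF pH wH e wb s0 s1] by simp
    qed
    have "norm (Gm xs - Gm ys) \<le> c * norm (xs - ys)"
      unfolding Gm_def c_def using seg_contr[OF z xsH ysH _ balls a0 a1] s0 e by simp
    also have "xs - ys = (1 - s) *\<^sub>R (x - y)" unfolding xs_def ys_def by (simp add: algebra_simps)
    also have "c * norm ((1 - s) *\<^sub>R (x - y)) \<le> c * norm (x - y)"
    proof -
      have "c * (1-s) \<le> c" using s0 c0 by (simp add: algebra_simps)
      hence "c * (1-s) * norm (x - y) \<le> c * norm (x - y)" by (rule mult_right_mono) simp
      thus ?thesis using s1 by (simp add: mult.assoc)
    qed
    finally have m: "norm (Gm xs - Gm ys) \<le> c * norm (x - y)" .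
    have l1: "norm (Gm x - Gm xs) \<le> (1 + a*\<nu>) * norm (x - xs)"
      unfolding Gm_def using Gm_lip[OF z x xsH] a0 by simp
    have l2: "norm (Gm ys - Gm y) \<le> (1 + a*\<nu>) * norm (ys - y)"
      unfolding Gm_def using Gm_lip[OF z ysH y] a0 by simp
    have nx: "norm (x - xs) = s * norm (x - w)" unfolding xs_def using s0
      by (simp add: norm_minus_commute)
    have ny: "norm (ys - y) = s * norm (w - y)" unfolding ys_def using s0 by simp
    have "norm (Gm x - Gm y) \<le> norm (Gm x - Gm xs) + norm (Gm xs - Gm ys) + norm (Gm ys - Gm y)"
      by (rule norm_diff_triangle_le[OF norm_diff_triangle_le[OF order_refl order_refl] order_refl])
    also have "\<dots> \<le> (1 + a*\<nu>) * (s * norm (x - w)) + c * norm (x - y) + (1 + a*\<nu>) * (s * norm (w - y))"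
    proof -
      have "norm (Gm x - Gm xs) \<le> (1 + a*\<nu>) * (s * norm (x - w))" using l1 nx by simp
      moreover have "norm (Gm ys - Gm y) \<le> (1 + a*\<nu>) * (s * norm (w - y))" using l2 ny by simp
      ultimately show ?thesis using m by linarith
    qed
    also have "\<dots> = c * norm (x - y) + s * K" unfolding K_def by (simp add: algebra_simps)
    finally show ?thesis .
  qed
  have "norm (Gm x - Gm y) \<le> c * norm (x - y)"
  proof (rule field_le_epsilon)
    fix \<epsilon> :: real assume \<epsilon>: "\<epsilon> > 0"
    define s where "s = min 1 (\<epsilon> / (K + 1))"
    have s0: "s > 0" unfolding s_def using \<epsilon> K0 by simp
    have s1: "s \<le> 1" unfolding s_def by simp
    have "s * K \<le> (\<epsilon> / (K + 1)) * K" unfolding s_def using K0 by (intro mult_right_mono) auto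
    also have "\<dots> \<le> \<epsilon>" using K0 \<epsilon> by (simp add: field_simps)
    finally show "norm (Gm x - Gm y) \<le> c * norm (x - y) + \<epsilon>" using main[OF s0 s1] by linarith
  qed
  thus ?thesis unfolding Gm_def c_def .
qed

lemma grad_bound:
  assumes h: "h \<in> H" and z: "z \<in> Z"
  shows "norm (g h z) \<le> L"
proof -
  define a1 where "a1 = 1/(\<sigma>+\<nu>)"
  have a1p: "a1 > 0" unfolding a1_def using s_pos nu_pos by simp
  define G where "G = g h z"
  have hp: "h - a1 *\<^sub>R G \<in> H" using step1 h z unfolding a1_def G_def by blast
  have key: "norm G \<le> L + \<nu> * s * norm G" if s0: "0 < s" and s1: "s \<le> a1" for s
  proof -
    define h' where "h' = h - s *\<^sub>R G"
    have "h + (s/a1) *\<^sub>R ((h - a1 *\<^sub>R G) - h) = h'" unfolding h'_def using a1p by simp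
    hence h'H: "h' \<in> H" using seg_in[OF h hp, of "s/a1"] s0 s1 a1p by simp
    have S: "\<sigma>/2 * (norm (h - h'))^2 + inner (g h' z) (h - h') \<le> F h z - F h' z"
      using sc h'H h z unfolding strongly_convex_in_h_def by blast
    have Lp: "\<bar>F h z - F h' z\<bar> \<le> L * norm (h - h')"
      using lip h h'H z unfolding lipschitz_in_h_def by blast
    have hh: "h - h' = s *\<^sub>R G" unfolding h'_def by simp
    have "0 \<le> \<sigma>/2 * (norm (h - h'))^2" using s_pos by simp
    hence "inner (g h' z) (h - h') \<le> L * norm (h - h')" using S Lp by linarith
    hence "s * inner (g h' z) G \<le> s * (L * norm G)"
      unfolding hh using s0 by (simp add: mult.left_commute)
    hence i1: "inner (g h' z) G \<le> L * norm G" using s0 by simp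
    have "inner (g h' z) G = inner G G + inner (g h' z - G) G" by (simp add: inner_diff_left)
    also have "inner (g h' z - G) G \<ge> - (norm (g h' z - G) * norm G)"
      using norm_cauchy_schwarz[of "G - g h' z" G] norm_minus_commute[of G "g h' z"] by (simp add: inner_diff_left)
    moreover have "norm (g h' z - G) \<le> \<nu> * norm (h' - h)"
      using sm h'H h z unfolding smooth_in_h_def G_def by blast
    moreover have "norm (h' - h) = s * norm G" unfolding h'_def using s0 by simp
    ultimately have "inner (g h' z) G \<ge> (norm G)^2 - \<nu> * s * norm G * norm G"
      using mult_right_mono[OF \<open>norm (g h' z - G) \<le> \<nu> * norm (h' - h)\<close> norm_ge_zero[of G]]
      by (simp add: power2_norm_eq_inner[symmetric])
    with i1 have "(norm G)^2 \<le> L * norm G + \<nu> * s * norm G * norm G" by linarith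
    hence "norm G * norm G \<le> (L + \<nu> * s * norm G) * norm G" by (simp add: power2_eq_square algebra_simps)
    thus ?thesis
    proof (cases "norm G = 0")
      case True thus ?thesis using L_nn by simp
    next
      case False hence "norm G > 0" by simp
      thus ?thesis using \<open>norm G * norm G \<le> (L + \<nu> * s * norm G) * norm G\<close> by simp
    qed
  qed
  have "norm G \<le> L"
  proof (rule field_le_epsilon)
    fix \<epsilon> :: real assume \<epsilon>: "\<epsilon> > 0"
    define K where "K = \<nu> * norm G"
    have K0: "K \<ge> 0" unfolding K_def using nu_pos by simp
    define s where "s = min a1 (\<epsilon> / (K + 1))"
    have s0: "s > 0" unfolding s_def using \<epsilon> K0 a1p by simp
    have s1: "s \<le> a1" unfolding s_def by simp
    have "s * K \<le> (\<epsilon> / (K + 1)) * K" unfolding s_def using K0 by (intro mult_right_mono) auto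
    also have "\<dots> \<le> \<epsilon>" using K0 \<epsilon> by (simp add: field_simps)
    finally show "norm G \<le> L + \<epsilon>" using key[OF s0 s1] unfolding K_def by (simp add: mult_ac)
  qed
  thus ?thesis unfolding G_def .
qed


end


context sgdset begin

lemma card_Suc_split:
  "card {t. t < Suc m \<and> P t} = card {t. t < m \<and> P t} + (if P m then 1 else 0)"
proof (cases "P m")
  case True
  hence "{t. t < Suc m \<and> P t} = insert m {t. t < m \<and> P t}" by auto
  thus ?thesis using True by simp
next
  case False
  hence "{t. t < Suc m \<and> P t} = {t. t < m \<and> P t}" using less_Suc_eq by auto
  thus ?thesis using False by simp
qed

lemma two_runs:
  fixes S S' :: "'z list" and \<theta> \<theta>' :: "nat list" and h0 :: 'a
  defines "\<alpha> \<equiv> (\<lambda>t. 1 / (\<sigma> * real t + \<nu>))"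
  assumes h0: "h0 \<in> H" and steps: "\<forall>h\<in>H. \<forall>z\<in>Z. \<forall>t\<in>{1..T}. h - \<alpha> t *\<^sub>R g h z \<in> H"
    and S: "S \<in> datasets Z n" and S': "S' \<in> datasets Z n"
    and th: "\<theta> \<in> hyperparams n T" and th': "\<theta>' \<in> hyperparams n T"
  shows "m \<le> T \<Longrightarrow> (\<sigma> * real m + \<nu>) * norm (sgd_iter \<alpha> g h0 S \<theta> m - sgd_iter \<alpha> g h0 S' \<theta>' m)
           \<le> 2 * L * real (card {t. t < m \<and> S ! (\<theta> ! t - 1) \<noteq> S' ! (\<theta>' ! t - 1)})"
proof (induction m)
  case 0 thus ?case by simp
next
  case (Suc m)
  define h where "h = sgd_iter \<alpha> g h0 S \<theta> m"
  define h' where "h' = sgd_iter \<alpha> g h0 S' \<theta>' m"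
  define zz where "zz = S ! (\<theta> ! m - 1)"
  define zz' where "zz' = S' ! (\<theta>' ! m - 1)"
  define a where "a = \<alpha> (Suc m)"
  define C where "C = card {t. t < m \<and> S ! (\<theta> ! t - 1) \<noteq> S' ! (\<theta>' ! t - 1)}"
  have mT: "m \<le> T" using Suc.prems by simp
  have IH: "(\<sigma> * real m + \<nu>) * norm (h - h') \<le> 2 * L * real C"
    using Suc.IH[OF mT] unfolding h_def h'_def C_def .
  have hH: "h \<in> H" unfolding h_def using iter_in_H[OF h0 steps S th mT] .
  have h'H: "h' \<in> H" unfolding h'_def using iter_in_H[OF h0 steps S' th' mT] .
  have zz: "zz \<in> Z" unfolding zz_def using zin[OF S th] Suc.prems by simp
  have zz': "zz' \<in> Z" unfolding zz'_def using zin[OF S' th'] Suc.prems by simp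
  have pos: "\<sigma> * real (Suc m) + \<nu> > 0" using s_pos nu_pos by (simp add: add_pos_pos)
  have a0: "0 < a" unfolding a_def \<alpha>_def using pos by simp
  have le: "\<sigma> + \<nu> \<le> \<sigma> * real (Suc m) + \<nu>" using s_pos by simp
  have a1: "a \<le> 1/(\<sigma>+\<nu>)" unfolding a_def \<alpha>_def
    by (rule divide_left_mono[OF le]) (use pos s_pos nu_pos in simp_all)
  have prod: "(\<sigma> * real (Suc m) + \<nu>) * (1 - a*\<sigma>) = \<sigma> * real m + \<nu>"
    unfolding a_def \<alpha>_def using pos by (simp add: field_simps)
  have pa: "(\<sigma> * real (Suc m) + \<nu>) * a = 1" unfolding a_def \<alpha>_def using pos by simp
  have new: "sgd_iter \<alpha> g h0 S \<theta> (Suc m) - sgd_iter \<alpha> g h0 S' \<theta>' (Suc m)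
      = (h - a *\<^sub>R g h zz) - (h' - a *\<^sub>R g h' zz')"
    unfolding h_def h'_def zz_def zz'_def a_def by simp
  have gc: "norm ((h - a *\<^sub>R g h zz) - (h' - a *\<^sub>R g h' zz)) \<le> (1 - a*\<sigma>) * norm (h - h')"
    by (rule global_contr[OF zz hH h'H a0 a1])
  show ?case
  proof (cases "zz = zz'")
    case True
    have cs: "card {t. t < Suc m \<and> S ! (\<theta> ! t - 1) \<noteq> S' ! (\<theta>' ! t - 1)} = C"
      unfolding card_Suc_split C_def using True unfolding zz_def zz'_def by simp
    have "(\<sigma> * real (Suc m) + \<nu>) * norm ((h - a *\<^sub>R g h zz) - (h' - a *\<^sub>R g h' zz'))
        \<le> (\<sigma> * real (Suc m) + \<nu>) * ((1 - a*\<sigma>) * norm (h - h'))"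
      using gc True pos by (intro mult_left_mono) auto
    also have "\<dots> = ((\<sigma> * real (Suc m) + \<nu>) * (1 - a*\<sigma>)) * norm (h - h')" by (rule mult.assoc[symmetric])
    also have "\<dots> = (\<sigma> * real m + \<nu>) * norm (h - h')" by (simp only: prod)
    finally show ?thesis unfolding new cs using IH by linarith
  next
    case False
    have cs: "card {t. t < Suc m \<and> S ! (\<theta> ! t - 1) \<noteq> S' ! (\<theta>' ! t - 1)} = C + 1"
      unfolding card_Suc_split C_def using False unfolding zz_def zz'_def by simp
    have E: "(h - a *\<^sub>R g h zz) - (h' - a *\<^sub>R g h' zz') = ((h - a *\<^sub>R g h zz) - (h' - a *\<^sub>R g h' zz)) + a *\<^sub>R (g h' zz' - g h' zz)"
      by (simp add: algebra_simps)
    have "norm (g h' zz' - g h' zz) \<le> norm (g h' zz') + norm (g h' zz)" by (rule norm_triangle_ineq4)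
    also have "\<dots> \<le> L + L" using grad_bound[OF h'H zz] grad_bound[OF h'H zz'] by linarith
    finally have gb: "norm (a *\<^sub>R (g h' zz' - g h' zz)) \<le> a * (2 * L)" using a0 by (simp add: mult_left_mono)
    have "norm ((h - a *\<^sub>R g h zz) - (h' - a *\<^sub>R g h' zz')) \<le> (1 - a*\<sigma>) * norm (h - h') + a * (2 * L)"
      unfolding E using gc gb norm_triangle_ineq[of "(h - a *\<^sub>R g h zz) - (h' - a *\<^sub>R g h' zz)" "a *\<^sub>R (g h' zz' - g h' zz)"]
      by linarith
    hence "(\<sigma> * real (Suc m) + \<nu>) * norm ((h - a *\<^sub>R g h zz) - (h' - a *\<^sub>R g h' zz'))
        \<le> (\<sigma> * real (Suc m) + \<nu>) * ((1 - a*\<sigma>) * norm (h - h') + a * (2 * L))"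
      using pos by (intro mult_left_mono) auto
    also have "\<dots> = ((\<sigma> * real (Suc m) + \<nu>) * (1 - a*\<sigma>)) * norm (h - h') + ((\<sigma> * real (Suc m) + \<nu>) * a) * (2 * L)"
      by (simp only: distrib_left mult.assoc)
    also have "\<dots> = (\<sigma> * real m + \<nu>) * norm (h - h') + 2 * L" by (simp only: prod pa mult_1_left)
    finally have "(\<sigma> * real (Suc m) + \<nu>) * norm ((h - a *\<^sub>R g h zz) - (h' - a *\<^sub>R g h' zz')) \<le> 2 * L * real C + 2 * L"
      using IH by linarith
    thus ?thesis unfolding new cs by (simp add: distrib_left)
  qed
qed

end



lemma hp_alt: "hyperparams n T = {xs. set xs \<subseteq> {1..n} \<and> length xs = T}"
  unfolding hyperparams_def by auto

lemma hp_finite: "finite (hyperparams n T)"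
  unfolding hp_alt by (rule finite_lists_length_eq) simp

lemma hp_ne: "n \<ge> 1 \<Longrightarrow> replicate T 1 \<in> hyperparams n T"
  unfolding hyperparams_def by auto

definition cnt :: "nat \<Rightarrow> nat \<Rightarrow> nat list \<Rightarrow> nat" where
  "cnt T j \<theta> = card {t. t < T \<and> \<theta> ! t = j}"

lemma cnt_sum: "cnt T j \<theta> = (\<Sum>t<T. if \<theta> ! t = j then 1 else 0)"
proof -
  have "{t. t < T \<and> \<theta> ! t = j} = {t \<in> {..<T}. \<theta> ! t = j}" by auto
  hence "cnt T j \<theta> = (\<Sum>t\<in>{t \<in> {..<T}. \<theta> ! t = j}. 1)" unfolding cnt_def by simp
  also have "\<dots> = (\<Sum>t<T. if \<theta> ! t = j then 1 else 0)" by (rule sum.inter_filter) simp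
  finally show ?thesis .
qed

definition swp :: "nat \<Rightarrow> nat \<Rightarrow> nat \<Rightarrow> nat" where
  "swp j j' x = (if x = j then j' else if x = j' then j else x)"

lemma swp_inv: "swp j j' (swp j j' x) = x" unfolding swp_def by auto

lemma cnt_swp: "cnt T j (map (swp j j') \<theta>) = cnt T j' \<theta>" if "length \<theta> = T"
proof -
  have "{t. t < T \<and> map (swp j j') \<theta> ! t = j} = {t. t < T \<and> \<theta> ! t = j'}"
    using that unfolding swp_def by (auto split: if_splits)
  thus ?thesis unfolding cnt_def by simp
qed

lemma sum_cnt_eq:
  assumes j: "j \<in> {1..n}" and j': "j' \<in> {1..n}"
  shows "(\<Sum>\<theta>\<in>hyperparams n T. cnt T j \<theta>) = (\<Sum>\<theta>\<in>hyperparams n T. cnt T j' \<theta>)"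
proof -
  have mem: "map (swp j j') \<theta> \<in> hyperparams n T" if "\<theta> \<in> hyperparams n T" for \<theta>
    using that j j' unfolding hyperparams_def swp_def by auto
  have bij: "bij_betw (map (swp j j')) (hyperparams n T) (hyperparams n T)"
  proof (rule bij_betwI[where g = "map (swp j j')"])
    show "map (swp j j') \<in> hyperparams n T \<rightarrow> hyperparams n T" using mem by blast
    show "map (swp j j') \<in> hyperparams n T \<rightarrow> hyperparams n T" using mem by blast
    show "map (swp j j') (map (swp j j') x) = x" for x by (simp add: swp_inv map_idI)
    show "map (swp j j') (map (swp j j') y) = y" for y by (simp add: swp_inv map_idI)
  qed
  have "(\<Sum>\<theta>\<in>hyperparams n T. cnt T j' \<theta>) = (\<Sum>\<theta>\<in>hyperparams n T. cnt T j (map (swp j j') \<theta>))"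
    by (rule sum.cong) (auto simp: cnt_swp hyperparams_def)
  also have "\<dots> = (\<Sum>\<theta>\<in>hyperparams n T. cnt T j \<theta>)"
    by (rule sum.reindex_bij_betw[OF bij])
  finally show ?thesis by simp
qed

lemma sum_cnt:
  assumes j: "j \<in> {1..n}"
  shows "real n * (\<Sum>\<theta>\<in>hyperparams n T. real (cnt T j \<theta>)) = real T * real (card (hyperparams n T))"
proof -
  have inner: "(\<Sum>i\<in>{1..n}. cnt T i \<theta>) = T" if "\<theta> \<in> hyperparams n T" for \<theta>
  proof -
    have "(\<Sum>i\<in>{1..n}. cnt T i \<theta>) = (\<Sum>t<T. \<Sum>i\<in>{1..n}. if \<theta> ! t = i then 1 else 0)"
      unfolding cnt_sum by (rule sum.swap)
    also have "\<dots> = (\<Sum>t<T. 1)"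
    proof (rule sum.cong)
      fix t assume "t \<in> {..<T}"
      hence "\<theta> ! t \<in> {1..n}" using that unfolding hyperparams_def by (auto dest!: nth_mem)
      thus "(\<Sum>i\<in>{1..n}. if \<theta> ! t = i then 1 else 0) = (1::nat)" by (simp add: sum.delta)
    qed simp
    finally show ?thesis by simp
  qed
  have "(\<Sum>i\<in>{1..n}. \<Sum>\<theta>\<in>hyperparams n T. cnt T i \<theta>) = (\<Sum>\<theta>\<in>hyperparams n T. \<Sum>i\<in>{1..n}. cnt T i \<theta>)"
    by (rule sum.swap)
  also have "\<dots> = (\<Sum>\<theta>\<in>hyperparams n T. T)" by (rule sum.cong[OF refl]) (rule inner)
  also have "(\<Sum>i\<in>{1..n}. \<Sum>\<theta>\<in>hyperparams n T. cnt T i \<theta>) = (\<Sum>i\<in>{1..n}. \<Sum>\<theta>\<in>hyperparams n T. cnt T j \<theta>)"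
    by (rule sum.cong) (auto intro: sum_cnt_eq[OF _ j])
  finally have "n * (\<Sum>\<theta>\<in>hyperparams n T. cnt T j \<theta>) = T * card (hyperparams n T)" by simp
  hence "real (n * (\<Sum>\<theta>\<in>hyperparams n T. cnt T j \<theta>)) = real (T * card (hyperparams n T))" by metis
  thus ?thesis by simp
qed




theorem proposition4:
  fixes X :: "'x::topological_space set" and Y :: "'y set"
    and Z :: "('x \<times> 'y) set"
    and H :: "'a::euclidean_space set"
    and l F :: "'a \<Rightarrow> 'x \<times> 'y \<Rightarrow> real"
    and gradF :: "'a \<Rightarrow> 'x \<times> 'y \<Rightarrow> 'a"
    and L M \<sigma> \<nu> :: real and n T :: nat and h0 :: 'a
  assumes Z_def: "Z = X \<times> Y" and X_compact: "compact X"
    and n_pos: "n \<ge> 1" and T_pos: "T \<ge> 1"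
    and sigma_pos: "\<sigma> > 0"
    and H_convex: "convex H"
    and h0_in: "h0 \<in> H"
    and loss_range: "\<forall>h\<in>H. \<forall>z\<in>Z. 0 \<le> l h z \<and> l h z \<le> M"
    and loss_lip: "lipschitz_in_h H Z l L"
    and grad: "is_gradient H Z F gradF"
    and F_sc: "strongly_convex_in_h H Z F gradF \<sigma>"
    and F_lip: "lipschitz_in_h H Z F L"
    and F_smooth: "smooth_in_h H Z gradF \<nu>"
    and steps_in_H: "\<forall>h\<in>H. \<forall>z\<in>Z. \<forall>t\<in>{1..T}.
                       h - (1 / (\<sigma> * real t + \<nu>)) *\<^sub>R gradF h z \<in> H"
  shows "uniformly_data_stable Z n
           (sgd (\<lambda>t. 1 / (\<sigma> * real t + \<nu>)) gradF h0) l
           (pmf_of_set (hyperparams n T)) (2 * L\<^sup>2 / (\<sigma> * real n))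
       \<and> uniformly_hyper_stable Z n (hyperparams n T)
           (sgd (\<lambda>t. 1 / (\<sigma> * real t + \<nu>)) gradF h0) l (2 * L\<^sup>2 / (\<sigma> * real T))"
proof -
  define \<alpha> where "\<alpha> = (\<lambda>t. 1 / (\<sigma> * real t + \<nu>))"
  define HP where "HP = hyperparams n T"
  define A where "A = sgd \<alpha> gradF h0"
  have finHP: "finite HP" unfolding HP_def by (rule hp_finite)
  have neHP: "HP \<noteq> {}" unfolding HP_def using hp_ne[OF n_pos] by blast
  have steps: "\<forall>h\<in>H. \<forall>z\<in>Z. \<forall>t\<in>{1..T}. h - \<alpha> t *\<^sub>R gradF h z \<in> H"
    using steps_in_H unfolding \<alpha>_def .
  have AH: "A S \<theta> \<in> H" if "S \<in> datasets Z n" "\<theta> \<in> HP" for S \<theta>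
  proof -
    have "length \<theta> = T" using that(2) unfolding HP_def hyperparams_def by simp
    thus ?thesis unfolding A_def sgd_def
      using iter_in_H[OF h0_in steps that(1), of \<theta> T] that(2) unfolding HP_def by simp
  qed
  have exp_eq: "measure_pmf.expectation (pmf_of_set HP) f = sum f HP / card HP" for f :: "nat list \<Rightarrow> real"
    by (rule integral_pmf_of_set[OF neHP finHP])
  have bn: "0 \<le> 2 * L\<^sup>2 / (\<sigma> * real n)" using sigma_pos by simp
  have bT: "0 \<le> 2 * L\<^sup>2 / (\<sigma> * real T)" using sigma_pos by simp
  consider (Zempty) "Z = {}" | (triv) "Z \<noteq> {}" "\<forall>h\<in>H. h = h0" | (main) "Z \<noteq> {}" "\<exists>h1\<in>H. h1 \<noteq> h0"
    by blast
  then show ?thesis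
  proof cases
    case Zempty
    have "datasets Z n = {}"
    proof (rule ccontr)
      assume "datasets Z n \<noteq> {}"
      then obtain S where "S \<in> datasets Z n" by blast
      hence "length S = n" "set S \<subseteq> Z" unfolding datasets_def by auto
      hence "S ! 0 \<in> Z" using n_pos by (metis One_nat_def Suc_le_eq nth_mem subsetD)
      thus False using Zempty by simp
    qed
    thus ?thesis unfolding uniformly_data_stable_def uniformly_hyper_stable_def by simp
  next
    case triv
    have eqA: "A S \<theta> = h0" if "S \<in> datasets Z n" "\<theta> \<in> HP" for S \<theta> using AH[OF that] triv by blast
    have D: "uniformly_data_stable Z n A l (pmf_of_set HP) (2 * L\<^sup>2 / (\<sigma> * real n))"
      unfolding uniformly_data_stable_def
    proof (intro ballI impI)
      fix S S' z assume S: "S \<in> datasets Z n" and S': "S' \<in> datasets Z n"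
      have "sum (\<lambda>\<theta>. l (A S \<theta>) z - l (A S' \<theta>) z) HP = 0"
        by (rule sum.neutral) (simp add: eqA[OF S] eqA[OF S'])
      thus "\<bar>measure_pmf.expectation (pmf_of_set HP) (\<lambda>\<theta>. l (A S \<theta>) z - l (A S' \<theta>) z)\<bar> \<le> 2 * L\<^sup>2 / (\<sigma> * real n)"
        unfolding exp_eq using bn by simp
    qed
    have Hy: "uniformly_hyper_stable Z n HP A l (2 * L\<^sup>2 / (\<sigma> * real T))"
      unfolding uniformly_hyper_stable_def using eqA bT by auto
    show ?thesis using D Hy unfolding A_def HP_def \<alpha>_def by simp
  next
    case main
    then obtain z0 h1 where z0: "z0 \<in> Z" and h1: "h1 \<in> H" "h1 \<noteq> h0" by blast
    define d where "d = h1 - h0"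
    have dpos: "norm d > 0" using h1 unfolding d_def by simp
    have sc1: "\<sigma>/2 * (norm (h1 - h0))^2 + inner (gradF h0 z0) (h1 - h0) \<le> F h1 z0 - F h0 z0"
      using F_sc h0_in h1 z0 unfolding strongly_convex_in_h_def by blast
    have sc2: "\<sigma>/2 * (norm (h0 - h1))^2 + inner (gradF h1 z0) (h0 - h1) \<le> F h0 z0 - F h1 z0"
      using F_sc h0_in h1 z0 unfolding strongly_convex_in_h_def by blast
    have "\<sigma> * (norm d)^2 \<le> inner (gradF h1 z0 - gradF h0 z0) d"
      using sc1 sc2 unfolding d_def by (simp add: norm_minus_commute inner_diff_left inner_diff_right inner_commute)
    also have "\<dots> \<le> norm (gradF h1 z0 - gradF h0 z0) * norm d" by (rule norm_cauchy_schwarz)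
    also have "\<dots> \<le> (\<nu> * norm d) * norm d"
      using F_smooth h0_in h1 z0 unfolding smooth_in_h_def d_def by (intro mult_right_mono) auto
    finally have "\<sigma> * (norm d * norm d) \<le> \<nu> * (norm d * norm d)" by (simp add: power2_eq_square mult_ac)
    hence nus: "\<nu> \<ge> \<sigma>" using dpos by simp
    have "\<bar>F h1 z0 - F h0 z0\<bar> \<le> L * norm d"
      using F_lip h0_in h1 z0 unfolding lipschitz_in_h_def d_def by blast
    hence "0 \<le> L * norm d" by linarith
    hence Lnn: "L \<ge> 0" using dpos by (simp add: zero_le_mult_iff)
    have step1: "\<forall>h\<in>H. \<forall>z\<in>Z. h - (1/(\<sigma>+\<nu>)) *\<^sub>R gradF h z \<in> H"
      using steps_in_H T_pos by (metis atLeastAtMost_iff le_refl mult.right_neutral of_nat_1)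
    interpret sgdset H Z F gradF \<sigma> \<nu> L
      by unfold_locales (use H_convex sigma_pos nus grad F_sc F_lip F_smooth Lnn step1 in auto)
    have "\<sigma> * real T \<ge> 0" using sigma_pos by simp
    hence pos: "\<sigma> * real T + \<nu> > 0" using nu_pos by linarith
    have lenT: "length \<theta> = T" if "\<theta> \<in> HP" for \<theta> using that unfolding HP_def hyperparams_def by simp
    have runs: "(\<sigma> * real T + \<nu>) * norm (A S \<theta> - A S' \<theta>')
           \<le> 2 * L * real (card {t. t < T \<and> S ! (\<theta> ! t - 1) \<noteq> S' ! (\<theta>' ! t - 1)})"
      if "S \<in> datasets Z n" "S' \<in> datasets Z n" "\<theta> \<in> HP" "\<theta>' \<in> HP" for S S' \<theta> \<theta>'
      using two_runs[OF h0_in steps[unfolded \<alpha>_def] that[unfolded HP_def], of T] that(3,4)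
      unfolding A_def sgd_def \<alpha>_def by (simp add: lenT)
    have lossb: "\<bar>l (A S \<theta>) z - l (A S' \<theta>') z\<bar> \<le> L * norm (A S \<theta> - A S' \<theta>')"
      if "S \<in> datasets Z n" "S' \<in> datasets Z n" "\<theta> \<in> HP" "\<theta>' \<in> HP" "z \<in> Z" for S S' \<theta> \<theta>' z
      using loss_lip AH[OF that(1,3)] AH[OF that(2,4)] that(5) unfolding lipschitz_in_h_def by blast
    have D: "uniformly_data_stable Z n A l (pmf_of_set HP) (2 * L\<^sup>2 / (\<sigma> * real n))"
      unfolding uniformly_data_stable_def
    proof (intro ballI impI)
      fix S S' z assume S: "S \<in> datasets Z n" and S': "S' \<in> datasets Z n" and ham: "hamming S S' = 1"
        and z: "z \<in> Z"
      have lS: "length S = n" using S unfolding datasets_def by simp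
      obtain k where k: "{i. i < length S \<and> S ! i \<noteq> S' ! i} = {k}"
        using ham unfolding hamming_def by (rule card_1_singletonE)
      have kn: "k < n" using k lS by auto
      define c0 where "c0 = 2 * L\<^sup>2 / (\<sigma> * real T + \<nu>)"
      have c0nn: "c0 \<ge> 0" unfolding c0_def using pos by simp
      have fb: "\<bar>l (A S \<theta>) z - l (A S' \<theta>) z\<bar> \<le> c0 * real (cnt T (Suc k) \<theta>)" if th: "\<theta> \<in> HP" for \<theta>
      proof -
        have sub: "{t. t < T \<and> S ! (\<theta> ! t - 1) \<noteq> S' ! (\<theta> ! t - 1)} \<subseteq> {t. t < T \<and> \<theta> ! t = Suc k}"
        proof safe
          fix t assume t: "t < T" and ne: "S ! (\<theta> ! t - 1) \<noteq> S' ! (\<theta> ! t - 1)"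
          have "\<theta> ! t \<in> {1..n}" using th t unfolding HP_def hyperparams_def by (auto dest!: nth_mem)
          hence "\<theta> ! t - 1 \<in> {i. i < length S \<and> S ! i \<noteq> S' ! i}" using ne lS by auto
          hence "\<theta> ! t - 1 = k" using k by simp
          thus "\<theta> ! t = Suc k" using \<open>\<theta> ! t \<in> {1..n}\<close> by auto
        qed
        have "card {t. t < T \<and> S ! (\<theta> ! t - 1) \<noteq> S' ! (\<theta> ! t - 1)} \<le> cnt T (Suc k) \<theta>"
          unfolding cnt_def by (rule card_mono[OF _ sub]) simp
        hence "real (card {t. t < T \<and> S ! (\<theta> ! t - 1) \<noteq> S' ! (\<theta> ! t - 1)}) \<le> real (cnt T (Suc k) \<theta>)" by simp
        hence "2 * L * real (card {t. t < T \<and> S ! (\<theta> ! t - 1) \<noteq> S' ! (\<theta> ! t - 1)}) \<le> 2 * L * real (cnt T (Suc k) \<theta>)"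
          by (rule mult_left_mono) (use Lnn in simp)
        hence "(\<sigma> * real T + \<nu>) * norm (A S \<theta> - A S' \<theta>) \<le> 2 * L * real (cnt T (Suc k) \<theta>)"
          using runs[OF S S' th th] by linarith
        hence nb: "norm (A S \<theta> - A S' \<theta>) \<le> 2 * L * real (cnt T (Suc k) \<theta>) / (\<sigma> * real T + \<nu>)"
          using pos by (simp add: le_divide_eq mult.commute)
        have "\<bar>l (A S \<theta>) z - l (A S' \<theta>) z\<bar> \<le> L * norm (A S \<theta> - A S' \<theta>)" by (rule lossb[OF S S' th th z])
        also have "\<dots> \<le> L * (2 * L * real (cnt T (Suc k) \<theta>) / (\<sigma> * real T + \<nu>))"
          using nb Lnn by (rule mult_left_mono)
        also have "\<dots> = c0 * real (cnt T (Suc k) \<theta>)" unfolding c0_def by (simp add: power2_eq_square)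
        finally show ?thesis .
      qed
      have cardpos: "real (card HP) > 0" using finHP neHP by (simp add: card_gt_0_iff)
      have "\<bar>sum (\<lambda>\<theta>. l (A S \<theta>) z - l (A S' \<theta>) z) HP\<bar> \<le> sum (\<lambda>\<theta>. \<bar>l (A S \<theta>) z - l (A S' \<theta>) z\<bar>) HP"
        by (rule sum_abs)
      also have "\<dots> \<le> sum (\<lambda>\<theta>. c0 * real (cnt T (Suc k) \<theta>)) HP" by (rule sum_mono) (rule fb)
      also have "\<dots> = c0 * (\<Sum>\<theta>\<in>HP. real (cnt T (Suc k) \<theta>))" by (simp add: sum_distrib_left)
      also have "(\<Sum>\<theta>\<in>HP. real (cnt T (Suc k) \<theta>)) = real T * real (card HP) / real n"
        using sum_cnt[of "Suc k" n T] kn n_pos unfolding HP_def by (simp add: field_simps)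
      finally have "\<bar>sum (\<lambda>\<theta>. l (A S \<theta>) z - l (A S' \<theta>) z) HP\<bar> / real (card HP) \<le> c0 * real T / real n"
        using cardpos by (simp add: divide_le_eq field_simps)
      also have "c0 * real T / real n \<le> 2 * L\<^sup>2 / (\<sigma> * real n)"
      proof -
        have "c0 * real T = 2 * L\<^sup>2 * (real T / (\<sigma> * real T + \<nu>))" unfolding c0_def by simp
        also have "real T / (\<sigma> * real T + \<nu>) \<le> 1 / \<sigma>"
          using pos sigma_pos nu_pos by (simp add: divide_le_eq field_simps)
        hence "2 * L\<^sup>2 * (real T / (\<sigma> * real T + \<nu>)) \<le> 2 * L\<^sup>2 * (1 / \<sigma>)"
          by (rule mult_left_mono) simp
        finally have "c0 * real T \<le> 2 * L\<^sup>2 / \<sigma>" by simp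
        hence "c0 * real T / real n \<le> (2 * L\<^sup>2 / \<sigma>) / real n" by (rule divide_right_mono) simp
        thus ?thesis by (simp add: divide_divide_eq_left mult.commute)
      qed
      finally show "\<bar>measure_pmf.expectation (pmf_of_set HP) (\<lambda>\<theta>. l (A S \<theta>) z - l (A S' \<theta>) z)\<bar> \<le> 2 * L\<^sup>2 / (\<sigma> * real n)"
        unfolding exp_eq using cardpos by simp
    qed
    have Hy: "uniformly_hyper_stable Z n HP A l (2 * L\<^sup>2 / (\<sigma> * real T))"
      unfolding uniformly_hyper_stable_def
    proof (intro ballI impI)
      fix S z \<theta> \<theta>' assume S: "S \<in> datasets Z n" and z: "z \<in> Z" and th: "\<theta> \<in> HP" and th': "\<theta>' \<in> HP"
        and ham: "hamming \<theta> \<theta>' = 1"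
      have sub: "{t. t < T \<and> S ! (\<theta> ! t - 1) \<noteq> S ! (\<theta>' ! t - 1)} \<subseteq> {i. i < length \<theta> \<and> \<theta> ! i \<noteq> \<theta>' ! i}"
        using lenT[OF th] by auto
      have "card {t. t < T \<and> S ! (\<theta> ! t - 1) \<noteq> S ! (\<theta>' ! t - 1)} \<le> 1"
        using card_mono[OF _ sub] ham unfolding hamming_def by simp
      hence "real (card {t. t < T \<and> S ! (\<theta> ! t - 1) \<noteq> S ! (\<theta>' ! t - 1)}) \<le> 1" by simp
      hence "2 * L * real (card {t. t < T \<and> S ! (\<theta> ! t - 1) \<noteq> S ! (\<theta>' ! t - 1)}) \<le> 2 * L * 1"
        by (rule mult_left_mono) (use Lnn in simp)
      hence "(\<sigma> * real T + \<nu>) * norm (A S \<theta> - A S \<theta>') \<le> 2 * L * 1"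
        using runs[OF S S th th'] by linarith
      hence nb: "norm (A S \<theta> - A S \<theta>') \<le> 2 * L / (\<sigma> * real T + \<nu>)"
        using pos by (simp add: le_divide_eq mult.commute)
      have "\<bar>l (A S \<theta>) z - l (A S \<theta>') z\<bar> \<le> L * norm (A S \<theta> - A S \<theta>')" by (rule lossb[OF S S th th' z])
      also have "\<dots> \<le> L * (2 * L / (\<sigma> * real T + \<nu>))" using nb Lnn by (rule mult_left_mono)
      also have "\<dots> \<le> L * (2 * L / (\<sigma> * real T))"
      proof (rule mult_left_mono[OF _ Lnn])
        have "\<sigma> * real T > 0" using sigma_pos T_pos by simp
        thus "2 * L / (\<sigma> * real T + \<nu>) \<le> 2 * L / (\<sigma> * real T)"
          using Lnn nu_pos by (intro divide_left_mono) auto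
      qed
      also have "\<dots> = 2 * L\<^sup>2 / (\<sigma> * real T)" by (simp add: power2_eq_square)
      finally show "\<bar>l (A S \<theta>) z - l (A S \<theta>') z\<bar> \<le> 2 * L\<^sup>2 / (\<sigma> * real T)" .
    qed
    show ?thesis using D Hy unfolding A_def HP_def \<alpha>_def by simp
  qed
qed


end
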